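(* Let $n\ge1$, $m\in\mathbb Z_+^n$, and let $c_\alpha\in\mathbb C$ for $0\le\alpha\le m$ with $c_m\ne0$ (and $c_\alpha=0$ otherwise). Let $X_0=\{\tau\in\mathbb Z^n:\tau\ge0,\ \tau\not\ge m\}$, $\varphi:X_0\to\mathbb C$, and let $f:\mathbb Z_+^n\to\mathbb C$ be the solution of $\sum_{0\le\alpha\le m}c_\alpha f(x+\alpha)=0$ ($x\in\mathbb Z_+^n$), $f=\varphi$ on $X_0$. Assume the generating function $F(z)=\sum_{x\ge0}f(x)/z^{x+I}$ converges in some neighborhood of infinity. Then $F(z)$ is a rational function if and only if the generating function of the initial data $\Phi(z)=\sum_{\tau\in X_0}\varphi(\tau)/z^{\tau+I}$ is a rational function.
   Context: $x\le y$ is componentwise; $\tau\not\ge m$ means $\tau_k<m_k$ for some $k$; $I=(1,\dots,1)$; $z^x=\prod z_k^{x_k}$. The condition $c_m\ne0$ expresses that $m$ belongs to the set of shifts occurring in the equation; under it the Cauchy problem has a unique solution. *)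

theory Defs
  imports "HOL-Analysis.Analysis"
begin

text \<open>Multi-indices are functions 'n => nat over a finite index type 'n (so n = CARD('n) >= 1);
points of C^n are functions 'n => complex.\<close>

definition mpow :: "('n::finite \<Rightarrow> complex) \<Rightarrow> ('n \<Rightarrow> nat) \<Rightarrow> complex" where
  "mpow z x = (\<Prod>k\<in>UNIV. z k ^ x k)"

definition is_mpoly :: "(('n::finite \<Rightarrow> nat) \<Rightarrow> complex) \<Rightarrow> bool" where
  "is_mpoly a \<longleftrightarrow> finite {\<beta>. a \<beta> \<noteq> 0}"

definition mpoly_eval :: "(('n::finite \<Rightarrow> nat) \<Rightarrow> complex) \<Rightarrow> ('n \<Rightarrow> complex) \<Rightarrow> complex" where
  "mpoly_eval a z = (\<Sum>\<beta>\<in>{\<beta>. a \<beta> \<noteq> 0}. a \<beta> * mpow z \<beta>)"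

definition rational_on :: "('n::finite \<Rightarrow> complex) set \<Rightarrow> (('n \<Rightarrow> complex) \<Rightarrow> complex) \<Rightarrow> bool" where
  "rational_on U G \<longleftrightarrow> (\<exists>P Q. is_mpoly P \<and> is_mpoly Q \<and> Q \<noteq> (\<lambda>_. 0) \<and>
      (\<forall>z\<in>U. mpoly_eval Q z \<noteq> 0 \<longrightarrow> G z = mpoly_eval P z / mpoly_eval Q z))"

definition nbhd_inf :: "real \<Rightarrow> ('n::finite \<Rightarrow> complex) set" where
  "nbhd_inf R = {z. \<forall>k. R < norm (z k)}"

end

theory Submission
  imports Defs
begin


definition pf :: "(('n::finite \<Rightarrow> complex) \<Rightarrow> complex) \<Rightarrow> bool" where
  "pf g \<longleftrightarrow> (\<exists>B a. finite B \<and> (\<forall>z. g z = (\<Sum>\<beta>\<in>B. a \<beta> * mpow z \<beta>)))"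

lemma mpow_add: "mpow z (\<lambda>l. \<alpha> l + \<beta> l) = mpow z \<alpha> * mpow z \<beta>"
  unfolding mpow_def by (simp add: power_add prod.distrib)

lemma mpow_0: "mpow z (\<lambda>_. 0) = 1"
  unfolding mpow_def by simp

lemma mpow_split: "mpow (z(k:=t)) \<beta> = mpow z (\<beta>(k:=0)) * t ^ \<beta> k"
proof -
  have "mpow (z(k:=t)) \<beta> = (z(k:=t)) k ^ \<beta> k * (\<Prod>l\<in>UNIV-{k}. (z(k:=t)) l ^ \<beta> l)"
    unfolding mpow_def by (rule prod.remove) auto
  moreover have "mpow z (\<beta>(k:=0)) = z k ^ (\<beta>(k:=0)) k * (\<Prod>l\<in>UNIV-{k}. z l ^ (\<beta>(k:=0)) l)"
    unfolding mpow_def by (rule prod.remove) auto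
  moreover have "(\<Prod>l\<in>UNIV-{k}. (z(k:=t)) l ^ \<beta> l) = (\<Prod>l\<in>UNIV-{k}. z l ^ (\<beta>(k:=0)) l)"
    by (rule prod.cong) auto
  ultimately show ?thesis by simp
qed

lemma pf_const: "pf (\<lambda>z. c)"
  unfolding pf_def by (rule exI[of _ "{\<lambda>_. 0}"], rule exI[of _ "\<lambda>_. c"]) (simp add: mpow_0)

lemma pf_coord: "pf (\<lambda>z. z k)"
proof -
  have "mpow z (\<lambda>l. if l = k then 1 else 0) = z k" for z :: "'a \<Rightarrow> complex"
    unfolding mpow_def by (subst prod.remove[of _ k]) auto
  then show ?thesis unfolding pf_def
    by (intro exI[of _ "{\<lambda>l. if l = k then 1 else 0}"] exI[of _ "\<lambda>_. 1"]) simp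
qed

lemma pf_add: assumes "pf g" "pf h" shows "pf (\<lambda>z. g z + h z)"
proof -
  obtain B a where B: "finite B" "\<And>z. g z = (\<Sum>\<beta>\<in>B. a \<beta> * mpow z \<beta>)" using assms(1) unfolding pf_def by blast
  obtain C b where C: "finite C" "\<And>z. h z = (\<Sum>\<beta>\<in>C. b \<beta> * mpow z \<beta>)" using assms(2) unfolding pf_def by blast
  define a' where "a' = (\<lambda>\<beta>. (if \<beta> \<in> B then a \<beta> else 0) + (if \<beta> \<in> C then b \<beta> else 0))"
  have "g z + h z = (\<Sum>\<beta>\<in>B\<union>C. a' \<beta> * mpow z \<beta>)" for z
  proof -
    have "g z = (\<Sum>\<beta>\<in>B\<union>C. (if \<beta> \<in> B then a \<beta> else 0) * mpow z \<beta>)"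
      unfolding B(2) using B(1) C(1) by (intro sum.mono_neutral_cong_left) auto
    moreover have "h z = (\<Sum>\<beta>\<in>B\<union>C. (if \<beta> \<in> C then b \<beta> else 0) * mpow z \<beta>)"
      unfolding C(2) using B(1) C(1) by (intro sum.mono_neutral_cong_left) auto
    ultimately show ?thesis unfolding a'_def by (simp add: sum.distrib distrib_right)
  qed
  then show ?thesis unfolding pf_def using B(1) C(1) by blast
qed

lemma pf_mult: assumes "pf g" "pf h" shows "pf (\<lambda>z. g z * h z)"
proof -
  obtain B a where B: "finite B" "\<And>z. g z = (\<Sum>\<beta>\<in>B. a \<beta> * mpow z \<beta>)" using assms(1) unfolding pf_def by blast
  obtain C b where C: "finite C" "\<And>z. h z = (\<Sum>\<beta>\<in>C. b \<beta> * mpow z \<beta>)" using assms(2) unfolding pf_def by blast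
  define pl where "pl = (\<lambda>(\<beta>::'a\<Rightarrow>nat,\<gamma>::'a\<Rightarrow>nat). (\<lambda>l. \<beta> l + \<gamma> l))"
  define D where "D = pl ` (B \<times> C)"
  define c where "c = (\<lambda>\<delta>. \<Sum>x\<in>{x\<in>B\<times>C. pl x = \<delta>}. a (fst x) * b (snd x))"
  have fin: "finite (B \<times> C)" using B(1) C(1) by simp
  have "g z * h z = (\<Sum>\<delta>\<in>D. c \<delta> * mpow z \<delta>)" for z
  proof -
    have "g z * h z = (\<Sum>x\<in>B\<times>C. a (fst x) * b (snd x) * mpow z (pl x))"
      unfolding B(2) C(2) sum_product sum.cartesian_product pl_def
      by (intro sum.cong) (auto simp: mpow_add)
    also have "\<dots> = (\<Sum>\<delta>\<in>D. \<Sum>x\<in>{x\<in>B\<times>C. pl x = \<delta>}. a (fst x) * b (snd x) * mpow z (pl x))"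
      unfolding D_def by (rule sum.image_gen[OF fin])
    also have "\<dots> = (\<Sum>\<delta>\<in>D. c \<delta> * mpow z \<delta>)"
      unfolding c_def sum_distrib_right by (intro sum.cong refl) auto
    finally show ?thesis .
  qed
  then show ?thesis unfolding pf_def using fin D_def by blast
qed

lemma pf_sum: "finite I \<Longrightarrow> (\<And>i. i \<in> I \<Longrightarrow> pf (g i)) \<Longrightarrow> pf (\<lambda>z. \<Sum>i\<in>I. g i z)"
  by (induction I rule: finite_induct) (auto intro: pf_add pf_const)

lemma pf_prod: "finite I \<Longrightarrow> (\<And>i. i \<in> I \<Longrightarrow> pf (g i)) \<Longrightarrow> pf (\<lambda>z. \<Prod>i\<in>I. g i z)"
  by (induction I rule: finite_induct) (auto intro: pf_mult pf_const)

lemma pf_power: "pf g \<Longrightarrow> pf (\<lambda>z. g z ^ n)"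
  by (induction n) (auto intro: pf_mult pf_const)

lemma pf_neg: "pf g \<Longrightarrow> pf (\<lambda>z. - g z)"
  using pf_mult[OF pf_const[of "-1"]] by simp

lemma pf_diff: "pf g \<Longrightarrow> pf h \<Longrightarrow> pf (\<lambda>z. g z - h z)"
  using pf_add[OF _ pf_neg] by simp

lemma pf_mpow: "pf (\<lambda>z. mpow z \<beta>)"
  unfolding mpow_def by (intro pf_prod pf_power pf_coord) auto



lemma uni_roots_finite:
  fixes c :: "nat \<Rightarrow> complex"
  assumes "finite I" "i0 \<in> I" "c i0 \<noteq> 0"
  shows "finite {t. (\<Sum>i\<in>I. c i * t ^ i) = 0}"
proof -
  define p where "p = (\<Sum>i\<in>I. monom (c i) i)"
  have ev: "poly p t = (\<Sum>i\<in>I. c i * t ^ i)" for t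
    unfolding p_def by (simp add: poly_sum poly_monom)
  have "coeff p i0 = (\<Sum>i\<in>I. if i0 = i then c i else 0)"
    unfolding p_def by (simp add: coeff_sum coeff_monom eq_commute)
  also have "\<dots> = c i0" using assms(1,2) by (simp add: sum.delta')
  finally have "p \<noteq> 0" using assms(3) by auto
  from poly_roots_finite[OF this] show ?thesis by (simp add: ev)
qed

lemma sum_split_var:
  fixes e :: "'b \<Rightarrow> ('n::finite \<Rightarrow> nat)"
  assumes "finite J"
  shows "(\<Sum>j\<in>J. a j * mpow (z(k:=t)) (e j)) =
    (\<Sum>i\<in>(\<lambda>j. e j k) ` J. (\<Sum>j\<in>{j\<in>J. e j k = i}. a j * mpow z ((e j)(k:=0))) * t ^ i)"
proof -
  have "(\<Sum>j\<in>J. a j * mpow (z(k:=t)) (e j)) = (\<Sum>j\<in>J. a j * mpow z ((e j)(k:=0)) * t ^ e j k)"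
    by (simp add: mpow_split mult.assoc)
  also have "\<dots> = (\<Sum>i\<in>(\<lambda>j. e j k) ` J. \<Sum>j\<in>{j\<in>J. e j k = i}. a j * mpow z ((e j)(k:=0)) * t ^ e j k)"
    by (rule sum.image_gen[OF assms])
  also have "\<dots> = (\<Sum>i\<in>(\<lambda>j. e j k) ` J. (\<Sum>j\<in>{j\<in>J. e j k = i}. a j * mpow z ((e j)(k:=0))) * t ^ i)"
    by (intro sum.cong refl) (auto simp: sum_distrib_right)
  finally show ?thesis .
qed

lemma single_mono:
  fixes e :: "'b \<Rightarrow> ('n::finite \<Rightarrow> nat)"
  assumes "inj_on e J" "\<And>j l. j\<in>J \<Longrightarrow> e j l = 0" "jj \<in> J" "a jj \<noteq> (0::complex)"
  shows "(\<Sum>j\<in>J. a j * mpow z (e j)) \<noteq> 0"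
proof -
  have "J = {jj}"
  proof safe
    fix j assume "j \<in> J"
    then have "e j = e jj" using assms(2,3) by auto
    then show "j = jj" using assms(1,3) \<open>j \<in> J\<close> by (meson inj_onD)
  qed (use assms in auto)
  moreover have "e jj = (\<lambda>_. 0)" using assms(2,3) by auto
  ultimately show ?thesis using assms(4) by (simp add: mpow_0)
qed

lemma KL_gen:
  fixes S :: "'n::finite set" and J1 J2 :: "('n\<Rightarrow>nat) set" and e1 e2 :: "('n\<Rightarrow>nat) \<Rightarrow> ('n \<Rightarrow> nat)"
    and a1 a2 :: "('n\<Rightarrow>nat) \<Rightarrow> complex"
  assumes "finite S"
    and "finite J1" "inj_on e1 J1" "\<And>j l. j\<in>J1 \<Longrightarrow> l\<notin>S \<Longrightarrow> e1 j l = 0" "j1 \<in> J1" "a1 j1 \<noteq> 0"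
    and "finite J2" "inj_on e2 J2" "\<And>j l. j\<in>J2 \<Longrightarrow> l\<notin>S \<Longrightarrow> e2 j l = 0" "j2 \<in> J2" "a2 j2 \<noteq> 0"
  shows "\<exists>z. (\<Sum>j\<in>J1. a1 j * mpow z (e1 j)) \<noteq> 0 \<and> (\<Sum>j\<in>J2. a2 j * mpow z (e2 j)) \<noteq> 0"
  using assms
proof (induction S arbitrary: J1 e1 a1 j1 J2 e2 a2 j2 rule: finite_induct)
  case empty
  have h1: "\<And>j l. j\<in>J1 \<Longrightarrow> e1 j l = 0" using empty.prems(3) by auto
  have h2: "\<And>j l. j\<in>J2 \<Longrightarrow> e2 j l = 0" using empty.prems(8) by auto
  show ?case
    using single_mono[where e=e1 and J=J1 and jj=j1 and a=a1, OF empty.prems(2) h1 empty.prems(4,5)]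
      single_mono[where e=e2 and J=J2 and jj=j2 and a=a2, OF empty.prems(7) h2 empty.prems(9,10)]
    by auto
next
  case (insert k S)
  have injk: "inj_on (\<lambda>j. (e j)(k:=0)) {j\<in>J. e j k = i}" if "inj_on e J" for e :: "('n\<Rightarrow>nat) \<Rightarrow> 'n \<Rightarrow> nat" and J i
  proof (rule inj_onI)
    fix x y assume xy: "x \<in> {j\<in>J. e j k = i}" "y \<in> {j\<in>J. e j k = i}" "(e x)(k:=0) = (e y)(k:=0)"
    have "e x = e y"
    proof
      fix l
      have "((e x)(k:=0)) l = ((e y)(k:=0)) l" using xy(3) by simp
      then show "e x l = e y l"
        using xy(1,2) by (cases "l = k") auto
    qed
    moreover from xy(1,2) have "x \<in> J" "y \<in> J" by auto
    ultimately show "x = y" using inj_onD[OF that] by blast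
  qed
  define i1 where "i1 = e1 j1 k"
  define i2 where "i2 = e2 j2 k"
  have v1: "((e1 j)(k:=0)) l = 0" if "j \<in> {j\<in>J1. e1 j k = i1}" "l \<notin> S" for j l
    using that insert.prems(3) by (cases "l = k") auto
  have v2: "((e2 j)(k:=0)) l = 0" if "j \<in> {j\<in>J2. e2 j k = i2}" "l \<notin> S" for j l
    using that insert.prems(8) by (cases "l = k") auto
  have fin1: "finite {j\<in>J1. e1 j k = i1}" using insert.prems(1) by simp
  have fin2: "finite {j\<in>J2. e2 j k = i2}" using insert.prems(6) by simp
  have mem1: "j1 \<in> {j\<in>J1. e1 j k = i1}" using insert.prems(4) unfolding i1_def by simp
  have mem2: "j2 \<in> {j\<in>J2. e2 j k = i2}" using insert.prems(9) unfolding i2_def by simp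
  have "\<exists>z. (\<Sum>j\<in>{j\<in>J1. e1 j k = i1}. a1 j * mpow z ((e1 j)(k:=0))) \<noteq> 0
       \<and> (\<Sum>j\<in>{j\<in>J2. e2 j k = i2}. a2 j * mpow z ((e2 j)(k:=0))) \<noteq> 0"
    by (rule insert.IH[where ?a1.0 = a1 and ?a2.0 = a2 and ?j1.0 = j1 and ?j2.0 = j2 and ?e1.0 = "\<lambda>j. (e1 j)(k:=0)" and ?e2.0 = "\<lambda>j. (e2 j)(k:=0)", OF fin1 injk[OF insert.prems(2), of i1] v1 mem1 insert.prems(5)
             fin2 injk[OF insert.prems(7), of i2] v2 mem2 insert.prems(10)])
  then obtain z where z1: "(\<Sum>j\<in>{j\<in>J1. e1 j k = i1}. a1 j * mpow z ((e1 j)(k:=0))) \<noteq> 0"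
      and z2: "(\<Sum>j\<in>{j\<in>J2. e2 j k = i2}. a2 j * mpow z ((e2 j)(k:=0))) \<noteq> 0" by blast
  define c1 where "c1 = (\<lambda>i. \<Sum>j\<in>{j\<in>J1. e1 j k = i}. a1 j * mpow z ((e1 j)(k:=0)))"
  define c2 where "c2 = (\<lambda>i. \<Sum>j\<in>{j\<in>J2. e2 j k = i}. a2 j * mpow z ((e2 j)(k:=0)))"
  have f1: "finite {t. (\<Sum>i\<in>(\<lambda>j. e1 j k) ` J1. c1 i * t ^ i) = 0}"
    by (rule uni_roots_finite[of _ i1]) (use insert.prems(1,4) z1 in \<open>simp_all add: c1_def i1_def\<close>)
  have f2: "finite {t. (\<Sum>i\<in>(\<lambda>j. e2 j k) ` J2. c2 i * t ^ i) = 0}"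
    by (rule uni_roots_finite[of _ i2]) (use insert.prems(6,9) z2 in \<open>simp_all add: c2_def i2_def\<close>)
  obtain t where t: "t \<notin> {t. (\<Sum>i\<in>(\<lambda>j. e1 j k) ` J1. c1 i * t ^ i) = 0} \<union> {t. (\<Sum>i\<in>(\<lambda>j. e2 j k) ` J2. c2 i * t ^ i) = 0}"
    using ex_new_if_finite[OF infinite_UNIV_char_0 finite_UnI[OF f1 f2]] by blast
  have e1: "(\<Sum>j\<in>J1. a1 j * mpow (z(k:=t)) (e1 j)) = (\<Sum>i\<in>(\<lambda>j. e1 j k) ` J1. c1 i * t ^ i)"
    unfolding c1_def by (rule sum_split_var[OF insert.prems(1)])
  have e2: "(\<Sum>j\<in>J2. a2 j * mpow (z(k:=t)) (e2 j)) = (\<Sum>i\<in>(\<lambda>j. e2 j k) ` J2. c2 i * t ^ i)"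
    unfolding c2_def by (rule sum_split_var[OF insert.prems(6)])
  have "(\<Sum>j\<in>J1. a1 j * mpow (z(k:=t)) (e1 j)) \<noteq> 0 \<and> (\<Sum>j\<in>J2. a2 j * mpow (z(k:=t)) (e2 j)) \<noteq> 0"
    unfolding e1 e2 using t by blast
  then show ?case by blast
qed

lemma KL:
  fixes g h :: "('n::finite \<Rightarrow> complex) \<Rightarrow> complex"
  assumes "pf g" "pf h" "g z1 \<noteq> 0" "h z2 \<noteq> 0"
  shows "\<exists>z. g z \<noteq> 0 \<and> h z \<noteq> 0"
proof -
  obtain B a where B: "finite B" "\<And>z. g z = (\<Sum>\<beta>\<in>B. a \<beta> * mpow z \<beta>)" using assms(1) unfolding pf_def by blast
  obtain C b where C: "finite C" "\<And>z. h z = (\<Sum>\<beta>\<in>C. b \<beta> * mpow z \<beta>)" using assms(2) unfolding pf_def by blast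
  have ex1: "\<exists>j\<in>B. a j \<noteq> 0"
  proof (rule ccontr)
    assume "\<not> (\<exists>j\<in>B. a j \<noteq> 0)"
    then have "g z1 = 0" unfolding B(2) by (auto intro: sum.neutral)
    then show False using assms(3) by simp
  qed
  moreover have "\<exists>j\<in>C. b j \<noteq> 0"
  proof (rule ccontr)
    assume "\<not> (\<exists>j\<in>C. b j \<noteq> 0)"
    then have "h z2 = 0" unfolding C(2) by (auto intro: sum.neutral)
    then show False using assms(4) by simp
  qed
  then obtain j1 j2 where "j1 \<in> B" "a j1 \<noteq> 0" "j2 \<in> C" "b j2 \<noteq> 0" using ex1 by blast
  from KL_gen[of "UNIV::'n set" B id j1 a C id j2 b, OF _ B(1) _ _ this(1,2) C(1) _ _ this(3,4)]
  show ?thesis unfolding B(2) C(2) by simp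
qed

lemma DEC:
  fixes g :: "('n::finite \<Rightarrow> complex) \<Rightarrow> complex"
  assumes "pf g"
  shows "\<exists>d q. (\<forall>i. pf (q i)) \<and> (\<forall>i z t. q i (z(k:=t)) = q i z) \<and> (\<forall>z. g z = (\<Sum>i\<le>d. q i z * z k ^ i))"
proof -
  obtain B a where B: "finite B" "\<And>z. g z = (\<Sum>\<beta>\<in>B. a \<beta> * mpow z \<beta>)" using assms(1) unfolding pf_def by blast
  define q where "q = (\<lambda>i z. \<Sum>\<beta>\<in>{\<beta>\<in>B. \<beta> k = i}. a \<beta> * mpow z (\<beta>(k:=0)))"
  define d where "d = (\<Sum>\<beta>\<in>B. \<beta> k)"
  have "pf (q i)" for i unfolding q_def by (intro pf_sum pf_mult pf_const pf_mpow) (use B in auto)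
  moreover have "q i (z(k:=t)) = q i z" for i z t
    unfolding q_def by (intro sum.cong refl) (simp add: mpow_split)
  moreover have "g z = (\<Sum>i\<le>d. q i z * z k ^ i)" for z
  proof -
    have "g z = (\<Sum>\<beta>\<in>B. a \<beta> * mpow (z(k:=z k)) \<beta>)" using B(2) by simp
    also have "\<dots> = (\<Sum>i\<in>(\<lambda>\<beta>. \<beta> k) ` B. q i z * z k ^ i)"
      unfolding q_def using sum_split_var[OF B(1), of a z k "z k" "\<lambda>\<beta>. \<beta>"] by simp
    also have "\<dots> = (\<Sum>i\<le>d. q i z * z k ^ i)"
    proof (rule sum.mono_neutral_left)
      show "(\<lambda>\<beta>. \<beta> k) ` B \<subseteq> {..d}" unfolding d_def using B(1)
        by (auto intro: member_le_sum)
      show "\<forall>i\<in>{..d} - (\<lambda>\<beta>. \<beta> k) ` B. q i z * z k ^ i = 0"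
        unfolding q_def by (auto intro!: sum.neutral)
    qed auto
    finally show ?thesis .
  qed
  ultimately show ?thesis by blast
qed

lemma LEAD:
  fixes g :: "('n::finite \<Rightarrow> complex) \<Rightarrow> complex"
  assumes "pf g" "g z0 \<noteq> 0"
  shows "\<exists>d q. (\<forall>i. pf (q i)) \<and> (\<forall>i z t. q i (z(k:=t)) = q i z) \<and> (\<forall>z. g z = (\<Sum>i\<le>d. q i z * z k ^ i))
     \<and> (\<exists>z. q d z \<noteq> 0)"
proof -
  obtain d q where q: "\<forall>i. pf (q i)" "\<forall>i z t. q i (z(k:=t)) = q i z" "\<forall>z. g z = (\<Sum>i\<le>d. q i z * z k ^ i)"
    using DEC[OF assms(1), of k] by blast
  have "\<forall>z. g z = (\<Sum>i\<le>d. q i z * z k ^ i) \<Longrightarrow> \<exists>d'. (\<forall>z. g z = (\<Sum>i\<le>d'. q i z * z k ^ i)) \<and> (\<exists>z. q d' z \<noteq> 0)"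
  proof (induction d)
    case 0
    have "q 0 z0 \<noteq> 0" using 0 assms(2) by simp
    then show ?case using 0 by blast
  next
    case (Suc d)
    show ?case
    proof (cases "\<exists>z. q (Suc d) z \<noteq> 0")
      case True then show ?thesis using Suc.prems by blast
    next
      case False
      then have "\<forall>z. g z = (\<Sum>i\<le>d. q i z * z k ^ i)" using Suc.prems by simp
      then show ?thesis using Suc.IH by blast
    qed
  qed
  then show ?thesis using q by blast
qed

definition rat :: "('n::finite \<Rightarrow> complex) set \<Rightarrow> (('n \<Rightarrow> complex) \<Rightarrow> complex) \<Rightarrow> bool" where
  "rat V G \<longleftrightarrow> (\<exists>P Q. pf P \<and> pf Q \<and> (\<exists>z. Q z \<noteq> 0) \<and> (\<forall>z\<in>V. Q z \<noteq> 0 \<longrightarrow> G z = P z / Q z))"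

lemma pf_nz_mult: "pf g \<Longrightarrow> pf h \<Longrightarrow> g z1 \<noteq> 0 \<Longrightarrow> h z2 \<noteq> 0 \<Longrightarrow> \<exists>z. g z * h z \<noteq> 0"
  using KL by fastforce

lemma rat_pf: "pf P \<Longrightarrow> rat V P"
  unfolding rat_def by (intro exI[of _ P] exI[of _ "\<lambda>_. 1"]) (auto intro: pf_const)

lemma ratI:
  assumes "pf P" "pf Q" "Q zw \<noteq> 0" "\<And>z. z \<in> V \<Longrightarrow> Q z \<noteq> 0 \<Longrightarrow> G z = P z / Q z"
  shows "rat V G"
  unfolding rat_def using assms by blast

lemma ratE:
  assumes "rat V G"
  obtains P Q zw where "pf P" "pf Q" "Q zw \<noteq> 0" "\<And>z. z \<in> V \<Longrightarrow> Q z \<noteq> 0 \<Longrightarrow> G z = P z / Q z"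
  using assms unfolding rat_def by blast

lemma rat_transfer:
  assumes "rat V G" "pf B" "B zw \<noteq> 0" "\<And>z. z \<in> U \<Longrightarrow> B z \<noteq> 0 \<Longrightarrow> z \<in> V \<and> G' z = G z"
  shows "rat U G'"
proof -
  obtain P Q z1 where PQ: "pf P" "pf Q" "Q z1 \<noteq> 0" "\<And>z. z \<in> V \<Longrightarrow> Q z \<noteq> 0 \<Longrightarrow> G z = P z / Q z"
    using ratE[OF assms(1)] by blast
  obtain w where w: "Q w * B w \<noteq> 0" using pf_nz_mult[OF PQ(2) assms(2) PQ(3) assms(3)] by blast
  show ?thesis
  proof (rule ratI[of "\<lambda>z. P z * B z" "\<lambda>z. Q z * B z", OF _ _ w])
    show "pf (\<lambda>z. P z * B z)" by (intro pf_mult PQ assms)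
    show "pf (\<lambda>z. Q z * B z)" by (intro pf_mult PQ assms)
    fix z assume z: "z \<in> U" "Q z * B z \<noteq> 0"
    then have "z \<in> V" "G' z = G z" using assms(4) by auto
    then show "G' z = P z * B z / (Q z * B z)" using z PQ(4) by simp
  qed
qed

lemma rat_add:
  assumes "rat V G" "rat V H" shows "rat V (\<lambda>z. G z + H z)"
proof -
  obtain P Q z1 where PQ: "pf P" "pf Q" "Q z1 \<noteq> 0" "\<And>z. z \<in> V \<Longrightarrow> Q z \<noteq> 0 \<Longrightarrow> G z = P z / Q z"
    using ratE[OF assms(1)] by blast
  obtain P' Q' z2 where PQ': "pf P'" "pf Q'" "Q' z2 \<noteq> 0" "\<And>z. z \<in> V \<Longrightarrow> Q' z \<noteq> 0 \<Longrightarrow> H z = P' z / Q' z"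
    using ratE[OF assms(2)] by blast
  obtain w where w: "Q w * Q' w \<noteq> 0" using pf_nz_mult[OF PQ(2) PQ'(2) PQ(3) PQ'(3)] by blast
  show ?thesis
  proof (rule ratI[of "\<lambda>z. P z * Q' z + P' z * Q z" "\<lambda>z. Q z * Q' z", OF _ _ w])
    show "pf (\<lambda>z. P z * Q' z + P' z * Q z)" by (intro pf_add pf_mult PQ PQ')
    show "pf (\<lambda>z. Q z * Q' z)" by (intro pf_mult PQ PQ')
    fix z assume z: "z \<in> V" "Q z * Q' z \<noteq> 0"
    then show "G z + H z = (P z * Q' z + P' z * Q z) / (Q z * Q' z)"
      using PQ(4) PQ'(4) by (simp add: add_divide_distrib)
  qed
qed

lemma rat_mult:
  assumes "rat V G" "rat V H" shows "rat V (\<lambda>z. G z * H z)"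
proof -
  obtain P Q z1 where PQ: "pf P" "pf Q" "Q z1 \<noteq> 0" "\<And>z. z \<in> V \<Longrightarrow> Q z \<noteq> 0 \<Longrightarrow> G z = P z / Q z"
    using ratE[OF assms(1)] by blast
  obtain P' Q' z2 where PQ': "pf P'" "pf Q'" "Q' z2 \<noteq> 0" "\<And>z. z \<in> V \<Longrightarrow> Q' z \<noteq> 0 \<Longrightarrow> H z = P' z / Q' z"
    using ratE[OF assms(2)] by blast
  obtain w where w: "Q w * Q' w \<noteq> 0" using pf_nz_mult[OF PQ(2) PQ'(2) PQ(3) PQ'(3)] by blast
  show ?thesis
  proof (rule ratI[of "\<lambda>z. P z * P' z" "\<lambda>z. Q z * Q' z", OF _ _ w])
    show "pf (\<lambda>z. P z * P' z)" by (intro pf_mult PQ PQ')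
    show "pf (\<lambda>z. Q z * Q' z)" by (intro pf_mult PQ PQ')
    fix z assume z: "z \<in> V" "Q z * Q' z \<noteq> 0"
    then show "G z * H z = (P z * P' z) / (Q z * Q' z)"
      using PQ(4) PQ'(4) by simp
  qed
qed

lemma rat_div:
  assumes "rat V G" "pf A" "A zw \<noteq> 0" shows "rat V (\<lambda>z. G z / A z)"
proof -
  obtain P Q z1 where PQ: "pf P" "pf Q" "Q z1 \<noteq> 0" "\<And>z. z \<in> V \<Longrightarrow> Q z \<noteq> 0 \<Longrightarrow> G z = P z / Q z"
    using ratE[OF assms(1)] by blast
  obtain w where w: "Q w * A w \<noteq> 0" using pf_nz_mult[OF PQ(2) assms(2) PQ(3) assms(3)] by blast
  show ?thesis
  proof (rule ratI[of "\<lambda>z. P z" "\<lambda>z. Q z * A z", OF _ _ w])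
    show "pf (\<lambda>z. P z)" by (rule PQ)
    show "pf (\<lambda>z. Q z * A z)" by (intro pf_mult PQ assms)
    fix z assume z: "z \<in> V" "Q z * A z \<noteq> 0"
    then show "G z / A z = P z / (Q z * A z)"
      using PQ(4) by simp
  qed
qed

lemma rat_const: "rat V (\<lambda>z. c)" by (rule rat_pf[OF pf_const])

lemma rat_neg: "rat V G \<Longrightarrow> rat V (\<lambda>z. - G z)"
  using rat_mult[OF rat_const[of V "-1"]] by simp

lemma rat_diff: "rat V G \<Longrightarrow> rat V H \<Longrightarrow> rat V (\<lambda>z. G z - H z)"
  using rat_add[OF _ rat_neg] by simp

lemma rat_sum: "finite I \<Longrightarrow> (\<And>i. i \<in> I \<Longrightarrow> rat V (G i)) \<Longrightarrow> rat V (\<lambda>z. \<Sum>i\<in>I. G i z)"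
  by (induction I rule: finite_induct) (auto intro: rat_add rat_const)

lemma pf_imp_mpoly:
  assumes "pf g" shows "\<exists>p. is_mpoly p \<and> (\<forall>z. g z = mpoly_eval p z)"
proof -
  obtain B a where B: "finite B" "\<And>z. g z = (\<Sum>\<beta>\<in>B. a \<beta> * mpow z \<beta>)" using assms(1) unfolding pf_def by blast
  define p where "p = (\<lambda>\<beta>. if \<beta> \<in> B then a \<beta> else 0)"
  have sub: "{\<beta>. p \<beta> \<noteq> 0} \<subseteq> B" unfolding p_def by auto
  have "is_mpoly p" unfolding is_mpoly_def using finite_subset[OF sub B(1)] .
  moreover have "g z = mpoly_eval p z" for z
    unfolding B(2) mpoly_eval_def
    by (rule sum.mono_neutral_cong_right[OF B(1) sub]) (auto simp: p_def)
  ultimately show ?thesis by blast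
qed

lemma mpoly_pf: "is_mpoly p \<Longrightarrow> pf (mpoly_eval p)"
  unfolding pf_def is_mpoly_def mpoly_eval_def by blast

lemma rational_on_iff_rat: "rational_on V G \<longleftrightarrow> rat V G"
proof
  assume "rational_on V G"
  then obtain P Q where PQ: "is_mpoly P" "is_mpoly Q" "Q \<noteq> (\<lambda>_. 0)"
      "\<forall>z\<in>V. mpoly_eval Q z \<noteq> 0 \<longrightarrow> G z = mpoly_eval P z / mpoly_eval Q z"
    unfolding rational_on_def by blast
  obtain \<beta>0 where b0: "Q \<beta>0 \<noteq> 0" using PQ(3) by auto
  have fin: "finite {\<beta>. Q \<beta> \<noteq> 0}" using PQ(2) unfolding is_mpoly_def .
  have "\<exists>z. (\<Sum>j\<in>{\<beta>. Q \<beta> \<noteq> 0}. Q j * mpow z (id j)) \<noteq> 0 \<and> (\<Sum>j\<in>{\<beta>. Q \<beta> \<noteq> 0}. Q j * mpow z (id j)) \<noteq> 0"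
    using KL_gen[of "UNIV::'a set" "{\<beta>. Q \<beta> \<noteq> 0}" id \<beta>0 Q "{\<beta>. Q \<beta> \<noteq> 0}" id \<beta>0 Q] fin b0
    by auto
  then obtain z where "mpoly_eval Q z \<noteq> 0" unfolding mpoly_eval_def by auto
  then show "rat V G" using PQ(4) by (intro ratI[OF mpoly_pf[OF PQ(1)] mpoly_pf[OF PQ(2)]]) auto
next
  assume "rat V G"
  then obtain P Q z1 where PQ: "pf P" "pf Q" "Q z1 \<noteq> 0" "\<forall>z\<in>V. Q z \<noteq> 0 \<longrightarrow> G z = P z / Q z"
    unfolding rat_def by blast
  obtain p where p: "is_mpoly p" "\<forall>z. P z = mpoly_eval p z" using pf_imp_mpoly[OF PQ(1)] by blast
  obtain q where q: "is_mpoly q" "\<forall>z. Q z = mpoly_eval q z" using pf_imp_mpoly[OF PQ(2)] by blast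
  have "q \<noteq> (\<lambda>_. 0)"
  proof
    assume "q = (\<lambda>_. 0)"
    then have "Q z1 = 0" using q(2) unfolding mpoly_eval_def by simp
    then show False using PQ(3) by simp
  qed
  then show "rational_on V G" unfolding rational_on_def using p q PQ(4)
    by (intro exI[of _ p] exI[of _ q]) auto
qed



definition gs :: "(('n::finite \<Rightarrow> nat) \<Rightarrow> complex) \<Rightarrow> ('n \<Rightarrow> nat) set \<Rightarrow> ('n \<Rightarrow> complex) \<Rightarrow> complex" where
  "gs g A z = (\<Sum>\<^sub>\<infinity>x\<in>A. g x / mpow z (\<lambda>l. x l + 1))"

definition Hk :: "(('n::finite \<Rightarrow> nat) \<Rightarrow> complex) \<Rightarrow> 'n \<Rightarrow> nat \<Rightarrow> ('n \<Rightarrow> complex) \<Rightarrow> complex" where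
  "Hk g k j z = (\<Sum>\<^sub>\<infinity>x\<in>{x. x k = j}. g x / mpow z ((\<lambda>l. x l + 1)(k:=0)))"

lemma upd_in_nbhd: "z \<in> nbhd_inf R \<Longrightarrow> R < norm t \<Longrightarrow> z(k:=t) \<in> nbhd_inf R"
  unfolding nbhd_inf_def by auto

lemma Hk_upd: "Hk g k j (z(k:=t)) = Hk g k j z"
  unfolding Hk_def by (intro infsum_cong) (simp add: mpow_split)

lemma Hk_has_sum:
  assumes summ: "(\<lambda>x. g x / mpow (z(k:=t)) (\<lambda>l. x l + 1)) summable_on UNIV" and t: "t \<noteq> 0"
  shows "((\<lambda>x. g x / mpow (z(k:=t)) (\<lambda>l. x l + 1)) has_sum (Hk g k j z / t^(j+1))) {x. x k = j}"
proof -
  define F where "F = (\<lambda>x. g x / mpow (z(k:=t)) (\<lambda>l. x l + 1))"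
  have Fs: "F summable_on {x. x k = j}"
    using summable_on_subset_banach[OF summ[folded F_def]] by blast
  have eq: "F x * t^(j+1) = g x / mpow z ((\<lambda>l. x l + 1)(k:=0))" if "x \<in> {x. x k = j}" for x
  proof -
    have m: "mpow (z(k:=t)) (\<lambda>l. x l + 1) = mpow z ((\<lambda>l. x l + 1)(k:=0)) * t^(j+1)"
      using mpow_split[of z k t "\<lambda>l. x l + 1"] that by simp
    show ?thesis unfolding F_def m using t by simp
  qed
  have Hs: "(\<lambda>x. g x / mpow z ((\<lambda>l. x l + 1)(k:=0))) summable_on {x. x k = j}"
  proof -
    have "(\<lambda>x. F x * t^(j+1)) summable_on {x. x k = j}" by (rule summable_on_cmult_left[OF Fs])
    moreover have "(\<lambda>x. F x * t^(j+1)) summable_on {x. x k = j} \<longleftrightarrow> (\<lambda>x. g x / mpow z ((\<lambda>l. x l + 1)(k:=0))) summable_on {x. x k = j}"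
      by (rule summable_on_cong) (rule eq)
    ultimately show ?thesis by simp
  qed
  have "Hk g k j z = (\<Sum>\<^sub>\<infinity>x\<in>{x. x k = j}. F x * t^(j+1))"
    unfolding Hk_def by (rule infsum_cong) (rule eq[symmetric])
  also have "\<dots> = infsum F {x. x k = j} * t^(j+1)"
    by (rule infsum_cmult_left) (use Fs in auto)
  finally have "infsum F {x. x k = j} = Hk g k j z / t^(j+1)" using t by simp
  moreover have "(F has_sum infsum F {x. x k = j}) {x. x k = j}" using Fs by (rule has_sum_infsum)
  ultimately show ?thesis unfolding F_def by simp
qed

lemma slab_sum:
  assumes summ: "(\<lambda>x. g x / mpow z (\<lambda>l. x l + 1)) summable_on UNIV" and t: "z k \<noteq> 0"
  shows "gs g {x. x k < a} z = (\<Sum>j<a. Hk g k j z / z k ^ (j+1))"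
proof -
  have zz: "z(k := z k) = z" by simp
  have hs: "((\<lambda>x. g x / mpow z (\<lambda>l. x l + 1)) has_sum (Hk g k j z / z k^(j+1))) {x. x k = j}" for j
    using Hk_has_sum[of g z k "z k" j] summ t by (simp add: zz)
  have "(\<Sum>j<a. Hk g k j z / z k ^ (j+1)) = (\<Sum>j<a. infsum (\<lambda>x. g x / mpow z (\<lambda>l. x l + 1)) {x. x k = j})"
    by (rule sum.cong[OF refl]) (rule infsumI[OF hs, symmetric])
  also have "\<dots> = infsum (\<lambda>x. g x / mpow z (\<lambda>l. x l + 1)) (\<Union>j<a. {x. x k = j})"
    by (rule sum_infsum) (use hs in \<open>auto simp: summable_on_def\<close>)
  also have "(\<Union>j<a. {x. x k = j}) = {x. x k < a}" by auto
  finally show ?thesis unfolding gs_def by simp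
qed

lemma full_sums:
  assumes summ: "(\<lambda>x. g x / mpow (z(k:=t)) (\<lambda>l. x l + 1)) summable_on UNIV" and t: "t \<noteq> 0"
  shows "(\<lambda>j. Hk g k j z / t^(j+1)) sums gs g UNIV (z(k:=t))"
proof -
  define F where "F = (\<lambda>x. g x / mpow (z(k:=t)) (\<lambda>l. x l + 1))"
  define h where "h = (\<lambda>x::'a\<Rightarrow>nat. (x k, x))"
  have inj: "inj h" unfolding h_def by (auto intro: injI)
  have img: "h ` UNIV = Sigma UNIV (\<lambda>j. {x. x k = j})" unfolding h_def by auto
  have "(\<lambda>(j,x). F x) summable_on (h ` UNIV)"
    using summ[folded F_def] by (subst summable_on_reindex[OF inj]) (simp add: h_def o_def)
  then have S: "(\<lambda>(j,x). F x) summable_on Sigma UNIV (\<lambda>j. {x. x k = j})" by (simp add: img)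
  have inner: "infsum F {x. x k = j} = Hk g k j z / t^(j+1)" for j
    using Hk_has_sum[OF summ t, of j] unfolding F_def by (simp add: infsumI)
  have "(\<lambda>j. infsum F {x. x k = j}) summable_on UNIV"
    using summable_on_Sigma_banach[OF S] .
  moreover have "(\<Sum>\<^sub>\<infinity>j. infsum F {x. x k = j}) = (\<Sum>\<^sub>\<infinity>(j,x)\<in>Sigma UNIV (\<lambda>j. {x. x k = j}). F x)"
    using infsum_Sigma'_banach[OF S] .
  moreover have "(\<Sum>\<^sub>\<infinity>(j,x)\<in>Sigma UNIV (\<lambda>j. {x. x k = j}). F x) = infsum F UNIV"
    unfolding img[symmetric] by (subst infsum_reindex[OF inj]) (simp add: h_def o_def)
  ultimately have "((\<lambda>j. infsum F {x. x k = j}) has_sum infsum F UNIV) UNIV"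
    by (metis has_sum_infsum)
  then have "(\<lambda>j. infsum F {x. x k = j}) sums infsum F UNIV" by (rule has_sum_imp_sums)
  moreover have "(\<lambda>j. infsum F {x. x k = j}) = (\<lambda>j. Hk g k j z / t^(j+1))" by (rule ext) (rule inner)
  ultimately show ?thesis unfolding gs_def F_def by simp
qed



lemma sum_atMost_rev: "(\<Sum>i\<le>(d::nat). f i) = (\<Sum>s\<le>d. f (d - s))"
  by (rule sum.reindex_bij_witness[where i="\<lambda>i. d - i" and j="\<lambda>i. d - i"]) auto

lemma pow_shift:
  fixes w :: complex
  assumes "w \<noteq> 0" "i \<le> L"
  shows "w ^ (L - i) = w ^ L * (1/w) ^ i"
proof -
  have "w ^ L = w ^ (L - i) * w ^ i" using assms(2) by (simp add: power_add[symmetric])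
  then show ?thesis using assms(1) by (simp add: power_one_over field_simps)
qed

lemma rev_poly_eq:
  fixes w :: complex
  assumes "w \<noteq> 0"
  shows "(\<Sum>s\<le>d. c (d - s) * w ^ s) = w ^ d * (\<Sum>i\<le>d. c i * (1/w) ^ i)"
proof -
  have "w ^ d * (\<Sum>i\<le>d. c i * (1/w) ^ i) = (\<Sum>i\<le>d. c i * w ^ (d - i))"
    unfolding sum_distrib_left by (intro sum.cong refl) (simp add: pow_shift[OF assms])
  also have "\<dots> = (\<Sum>s\<le>d. c (d - s) * w ^ (d - (d - s)))" by (rule sum_atMost_rev)
  also have "\<dots> = (\<Sum>s\<le>d. c (d - s) * w ^ s)" by (intro sum.cong refl) auto
  finally show ?thesis by simp
qed

lemma coeff_identity:
  fixes Hs qc pc :: "nat \<Rightarrow> complex" and G :: "complex \<Rightarrow> complex" and \<rho> :: real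
  assumes qd: "qc d \<noteq> 0"
    and \<rho>: "\<rho> > 0"
    and sums: "\<And>w. w \<noteq> 0 \<Longrightarrow> norm w < \<rho> \<Longrightarrow> (\<lambda>j. Hs j * w^(j+1)) sums G w"
    and eq: "\<And>w. w \<noteq> 0 \<Longrightarrow> norm w < \<rho> \<Longrightarrow> (\<Sum>i\<le>d. qc i * (1/w)^i) \<noteq> 0 \<Longrightarrow>
              (\<Sum>i\<le>d. qc i * (1/w)^i) * G w = (\<Sum>i\<le>E. pc i * (1/w)^i)"
  shows "(\<Sum>i=0..r. (if i \<le> d then qc (d-i) else 0) * Hs (r-i)) = (\<Sum>i\<le>E. if d+E+1-i = E+2+r then pc i else 0)"
proof -
  define a0 where "a0 = (\<Sum>s\<le>d. monom (qc (d-s)) s)"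
  define bp where "bp = (\<Sum>i\<le>E. monom (pc i) (d+E+1-i))"
  define h0 where "h0 = Abs_fps Hs"
  define Lf where "Lf = fps_of_poly (monom 1 (E+2)) * (fps_of_poly a0 * h0)"
  define r0 where "r0 = \<rho> / 2"
  have r0: "r0 > 0" "r0 < \<rho>" using \<rho> unfolding r0_def by auto
  have pa0: "poly a0 w = (\<Sum>s\<le>d. qc (d-s) * w ^ s)" for w
    unfolding a0_def by (simp add: poly_sum poly_monom)
  have pbp: "poly bp w = (\<Sum>i\<le>E. pc i * w ^ (d+E+1-i))" for w
    unfolding bp_def by (simp add: poly_sum poly_monom)
  have sums0: "(\<lambda>j. Hs j * w^j) sums (G w / w)" if "w \<noteq> 0" "norm w < \<rho>" for w
  proof -
    have "(\<lambda>j. Hs j * w^(j+1) / w) sums (G w / w)" using sums_divide[OF sums[OF that]] .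
    moreover have "(\<lambda>j. Hs j * w^(j+1) / w) = (\<lambda>j. Hs j * w^j)" using that(1) by (auto simp: field_simps)
    ultimately show ?thesis by simp
  qed
  have "summable (\<lambda>j. Hs j * (complex_of_real r0)^j)"
    using sums0[of "complex_of_real r0"] r0 by (auto simp: sums_iff)
  then have "conv_radius Hs \<ge> norm (complex_of_real r0)" by (rule conv_radius_geI)
  then have rad_h0: "fps_conv_radius h0 \<ge> ereal r0" unfolding h0_def fps_conv_radius_def using r0 by simp
  have rad_prod: "fps_conv_radius (fps_of_poly a0 * h0) \<ge> ereal r0"
    using fps_conv_radius_mult[of "fps_of_poly a0" h0] rad_h0 by (simp add: min_def split: if_splits)
  have radL: "fps_conv_radius Lf \<ge> ereal r0"
    using fps_conv_radius_mult[of "fps_of_poly (monom 1 (E+2))" "fps_of_poly a0 * h0"] rad_prod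
    unfolding Lf_def by (simp add: min_def split: if_splits)
  have evL: "eval_fps Lf w = w^(E+2) * (poly a0 w * eval_fps h0 w)" if "norm w < r0" for w
  proof -
    have lt: "ereal (norm w) < ereal r0" using that by simp
    have "norm w < fps_conv_radius (fps_of_poly a0 * h0)" using less_le_trans[OF lt rad_prod] .
    moreover have "norm w < fps_conv_radius h0" using less_le_trans[OF lt rad_h0] .
    ultimately show ?thesis unfolding Lf_def
      by (simp add: eval_fps_mult poly_monom)
  qed
  have evh0: "eval_fps h0 w = G w / w" if "w \<noteq> 0" "norm w < r0" for w
    unfolding eval_fps_def h0_def using sums0[of w] that r0 by (simp add: sums_iff)
  have cont: "isCont (poly a0) 0" by simp
  have "poly a0 0 = qc d" unfolding pa0 by (simp add: zero_power)
  then have "\<forall>\<^sub>F w in at 0. poly a0 w \<noteq> 0"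
    using qd cont by (metis continuous_at_avoid eventually_at_filter eventually_mono isCont_def tendsto_imp_eventually_ne)
  moreover have "\<forall>\<^sub>F w in at 0. norm w < r0"
    using r0 by (auto simp: eventually_at intro!: exI[of _ r0])
  moreover have "\<forall>\<^sub>F w in at (0::complex). w \<noteq> 0" by (simp add: eventually_at_filter)
  ultimately have ev_at: "\<forall>\<^sub>F w in at 0. eval_fps Lf w = eval_fps (fps_of_poly bp) w"
  proof (eventually_elim)
    case (elim w)
    have Qw: "(\<Sum>i\<le>d. qc i * (1/w)^i) \<noteq> 0" using elim(1,3) unfolding pa0 rev_poly_eq[OF elim(3)] by simp
    have "eval_fps Lf w = w^(E+2) * (poly a0 w * (G w / w))" using evL evh0 elim by simp
    also have "\<dots> = w^(E+1) * w^d * ((\<Sum>i\<le>d. qc i * (1/w)^i) * G w)"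
      unfolding pa0 rev_poly_eq[OF elim(3)] using elim(3) by (simp add: field_simps power_add)
    also have "\<dots> = w^(d+E+1) * (\<Sum>i\<le>E. pc i * (1/w)^i)"
      using eq[OF elim(3) _ Qw] elim r0 by (simp add: power_add)
    also have "\<dots> = poly bp w"
      unfolding pbp sum_distrib_left by (intro sum.cong refl) (simp add: pow_shift[OF elim(3)] mult.commute)
    finally show ?case by simp
  qed
  have at0: "eval_fps Lf 0 = eval_fps (fps_of_poly bp) 0"
    unfolding eval_fps_at_0 Lf_def bp_def by (simp add: fps_mult_nth coeff_sum)
  have "\<forall>\<^sub>F w in nhds 0. eval_fps Lf w = eval_fps (fps_of_poly bp) w"
    using ev_at at0 by (simp add: eventually_nhds_conv_at)
  moreover have "fps_conv_radius Lf > 0"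
  proof -
    have "ereal 0 < ereal r0" using r0 by simp
    from less_le_trans[OF this radL] show ?thesis by (simp add: zero_ereal_def)
  qed
  ultimately have LB: "Lf = fps_of_poly bp" by (intro eval_fps_eqD) auto
  have "fps_nth Lf (E+2+r) = fps_nth (fps_of_poly a0 * h0) r"
    unfolding Lf_def fps_of_poly_monom' fps_X_power_mult_nth by simp
  also have "\<dots> = (\<Sum>i=0..r. (if i \<le> d then qc (d-i) else 0) * Hs (r-i))"
    unfolding fps_mult_nth h0_def a0_def by (intro sum.cong refl) (simp add: coeff_sum sum.delta')
  finally have 1: "fps_nth Lf (E+2+r) = (\<Sum>i=0..r. (if i \<le> d then qc (d-i) else 0) * Hs (r-i))" .
  have 2: "fps_nth (fps_of_poly bp) (E+2+r) = (\<Sum>i\<le>E. if d+E+1-i = E+2+r then pc i else 0)"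
    unfolding bp_def by (simp add: coeff_sum)
  show ?thesis using 1 2 LB by simp
qed



lemma pf_if: "pf f \<Longrightarrow> pf (\<lambda>z. if c then f z else 0)"
  by (cases c) (auto intro: pf_const)

lemma SL:
  fixes g :: "('n::finite \<Rightarrow> nat) \<Rightarrow> complex" and R :: real
  assumes summ: "\<And>z. z \<in> nbhd_inf R \<Longrightarrow> (\<lambda>x. g x / mpow z (\<lambda>l. x l + 1)) summable_on UNIV"
    and r: "rat (nbhd_inf R) (gs g UNIV)"
  shows "rat (nbhd_inf R) (gs g {x. x k < a})"
proof -
  define U where "U = (nbhd_inf R :: ('n \<Rightarrow> complex) set)"
  obtain P Q z0 where PQ: "pf P" "pf Q" "Q z0 \<noteq> 0" "\<And>z. z \<in> U \<Longrightarrow> Q z \<noteq> 0 \<Longrightarrow> gs g UNIV z = P z / Q z"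
    using ratE[OF r] unfolding U_def by blast
  obtain d q where q: "\<And>i. pf (q i)" "\<And>i z t. q i (z(k:=t)) = q i z" "\<And>z. Q z = (\<Sum>i\<le>d. q i z * z k ^ i)"
      and qd: "\<exists>z. q d z \<noteq> 0"
    using LEAD[OF PQ(2,3), of k] by blast
  obtain z1 where z1: "q d z1 \<noteq> 0" using qd by blast
  obtain E p where p: "\<And>i. pf (p i)" "\<And>i z t. p i (z(k:=t)) = p i z" "\<And>z. P z = (\<Sum>i\<le>E. p i z * z k ^ i)"
    using DEC[OF PQ(1), of k] by blast
  define V where "V = {z\<in>U. q d z \<noteq> 0}"
  define pp where "pp = (\<lambda>r z. \<Sum>i\<le>E. if d+E+1-i = E+2+r then p i z else 0)"
  define \<rho> where "\<rho> = 1 / (\<bar>R\<bar> + 1)"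
  have \<rho>: "\<rho> > 0" unfolding \<rho>_def by (simp add: add_pos_nonneg)
  have tbig: "R < norm (1/w)" "1/w \<noteq> 0" if "w \<noteq> 0" "norm w < \<rho>" for w :: complex
  proof -
    have "norm w * (\<bar>R\<bar> + 1) < 1" using that unfolding \<rho>_def
      by (simp add: field_simps add_pos_nonneg)
    then have "\<bar>R\<bar> + 1 < 1 / norm w" using that(1) by (simp add: field_simps)
    then show "R < norm (1/w)" by (simp add: norm_divide)
    show "1/w \<noteq> 0" using that by simp
  qed
  have CI: "(\<Sum>i=0..r. (if i \<le> d then q (d-i) z else 0) * Hk g k (r-i) z) = pp r z" if z: "z \<in> V" for z r
    unfolding pp_def
  proof (rule coeff_identity[where \<rho>=\<rho> and G="\<lambda>w. gs g UNIV (z(k:=1/w))"])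
    show "q d z \<noteq> 0" using z unfolding V_def by simp
    show "\<rho> > 0" by (rule \<rho>)
  next
    fix w :: complex assume w: "w \<noteq> 0" "norm w < \<rho>"
    have zU: "z(k:=1/w) \<in> U" using z tbig[OF w] upd_in_nbhd unfolding V_def U_def by blast
    have s: "(\<lambda>j. Hk g k j z / (1/w)^(j+1)) sums gs g UNIV (z(k:=1/w))"
      by (rule full_sums) (use summ zU tbig[OF w] in \<open>auto simp: U_def\<close>)
    moreover have "(\<lambda>j. Hk g k j z / (1/w)^(j+1)) = (\<lambda>j. Hk g k j z * w^(j+1))"
      by (rule ext) (simp add: power_one_over)
    ultimately show "(\<lambda>j. Hk g k j z * w^(j+1)) sums gs g UNIV (z(k:=1/w))" by simp
  next
    fix w :: complex assume w: "w \<noteq> 0" "norm w < \<rho>"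
    have zU: "z(k:=1/w) \<in> U" using z tbig[OF w] upd_in_nbhd unfolding V_def U_def by blast
    have Qe: "Q (z(k:=1/w)) = (\<Sum>i\<le>d. q i z * (1/w)^i)" using q(2,3) by simp
    have Pe: "P (z(k:=1/w)) = (\<Sum>i\<le>E. p i z * (1/w)^i)" using p(2,3) by simp
    assume nz: "(\<Sum>i\<le>d. q i z * (1/w)^i) \<noteq> 0"
    have "gs g UNIV (z(k:=1/w)) = P (z(k:=1/w)) / Q (z(k:=1/w))"
      using PQ(4)[OF zU] nz Qe by simp
    then show "(\<Sum>i\<le>d. q i z * (1/w)^i) * gs g UNIV (z(k:=1/w)) = (\<Sum>i\<le>E. p i z * (1/w)^i)"
      using nz Qe Pe by simp
  qed
  have pp_pf: "pf (pp r)" for r unfolding pp_def by (intro pf_sum pf_if p) auto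
  have ratH: "rat V (Hk g k r)" for r
  proof (induction r rule: less_induct)
    case (less r)
    define ex where "ex = (\<lambda>z. (pp r z - (\<Sum>i\<in>{1..r}. (if i \<le> d then q (d-i) z else 0) * Hk g k (r-i) z)) / q d z)"
    have rex: "rat V ex" unfolding ex_def
    proof (rule rat_div[OF _ q(1) z1], rule rat_diff[OF rat_pf[OF pp_pf]], rule rat_sum)
      fix i assume i: "i \<in> {1..r}"
      show "rat V (\<lambda>z. (if i \<le> d then q (d-i) z else 0) * Hk g k (r-i) z)"
        by (rule rat_mult[OF rat_pf[OF pf_if[OF q(1)]] less.IH]) (use i in auto)
    qed simp
    have eqx: "Hk g k r z = ex z" if "z \<in> V" for z
    proof -
      have "{0..r} = insert 0 {1..r}" by auto
      then have "q d z * Hk g k r z + (\<Sum>i\<in>{1..r}. (if i \<le> d then q (d-i) z else 0) * Hk g k (r-i) z) = pp r z"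
        using CI[OF that, of r] by simp
      moreover have "q d z \<noteq> 0" using that unfolding V_def by simp
      ultimately show ?thesis unfolding ex_def by (simp add: field_simps)
    qed
    show ?case by (rule rat_transfer[where zw=z0, OF rex pf_const[of 1]]) (use eqx in auto)
  qed
  have ratHU: "rat U (Hk g k r)" for r
    by (rule rat_transfer[OF ratH q(1) z1]) (auto simp: V_def)
  have rs: "rat U (\<lambda>z. \<Sum>j<a. Hk g k j z / z k ^ (j+1))"
    by (intro rat_sum rat_div[OF ratHU, where zw="\<lambda>_. 1"] pf_power pf_coord) auto
  have sl: "gs g {x. x k < a} z = (\<Sum>j<a. Hk g k j z / z k ^ (j+1))" if "z \<in> U" "z k \<noteq> 0" for z
    by (rule slab_sum) (use summ that in \<open>auto simp: U_def\<close>)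
  have "rat U (gs g {x. x k < a})"
    by (rule rat_transfer[where zw="\<lambda>_. 1", OF rs pf_coord[of k]]) (use sl in auto)
  then show ?thesis unfolding U_def .
qed



lemma gs_restrict: "gs (\<lambda>x. if x \<in> A then g x else 0) B z = gs g (A \<inter> B) z"
  unfolding gs_def by (rule infsum_cong_neutral) auto

lemma summ_restrict:
  assumes "(\<lambda>x. g x / mpow z (\<lambda>l. x l + 1)) summable_on UNIV"
  shows "(\<lambda>x. (if x \<in> A then g x else 0) / mpow z (\<lambda>l. x l + 1)) summable_on UNIV"
proof -
  have "(\<lambda>x. g x / mpow z (\<lambda>l. x l + 1)) summable_on A"
    using summable_on_subset_banach[OF assms] by blast
  moreover have "(\<lambda>x. (if x \<in> A then g x else 0) / mpow z (\<lambda>l. x l + 1)) summable_on UNIV \<longleftrightarrow>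
      (\<lambda>x. g x / mpow z (\<lambda>l. x l + 1)) summable_on A"
    by (rule summable_on_cong_neutral) auto
  ultimately show ?thesis by simp
qed

lemma gs_split:
  assumes "(\<lambda>x. g x / mpow z (\<lambda>l. x l + 1)) summable_on UNIV"
  shows "gs g A z = gs g (A \<inter> B) z + gs g (A - B) z"
proof -
  have s1: "(\<lambda>x. g x / mpow z (\<lambda>l. x l + 1)) summable_on (A \<inter> B)"
    using summable_on_subset_banach[OF assms] by blast
  have s2: "(\<lambda>x. g x / mpow z (\<lambda>l. x l + 1)) summable_on (A - B)"
    using summable_on_subset_banach[OF assms] by blast
  have "A = (A \<inter> B) \<union> (A - B)" by auto
  then have "gs g A z = gs g ((A \<inter> B) \<union> (A - B)) z" by simp
  also have "\<dots> = gs g (A \<inter> B) z + gs g (A - B) z"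
    unfolding gs_def by (rule infsum_Un_disjoint[OF s1 s2]) auto
  finally show ?thesis .
qed

lemma TL:
  fixes g :: "('n::finite \<Rightarrow> nat) \<Rightarrow> complex" and R :: real and K :: "'n set"
  assumes summ: "\<And>z. z \<in> nbhd_inf R \<Longrightarrow> (\<lambda>x. g x / mpow z (\<lambda>l. x l + 1)) summable_on UNIV"
    and r: "rat (nbhd_inf R) (gs g UNIV)"
    and K: "finite K"
  shows "rat (nbhd_inf R) (gs g {x. \<forall>k\<in>K. a k \<le> x k})"
  using K
proof (induction K rule: finite_induct)
  case empty
  then show ?case using r by simp
next
  case (insert j K)
  define A where "A = {x. \<forall>k\<in>K. a k \<le> x k}"
  define g' where "g' = (\<lambda>x. if x \<in> A then g x else 0)"
  have summ': "(\<lambda>x. g' x / mpow z (\<lambda>l. x l + 1)) summable_on UNIV" if "z \<in> nbhd_inf R" for z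
    unfolding g'_def by (rule summ_restrict[OF summ[OF that]])
  have r': "rat (nbhd_inf R) (gs g' UNIV)"
    using insert.IH unfolding g'_def gs_restrict A_def by simp
  have "rat (nbhd_inf R) (gs g' {x. x j < a j})" by (rule SL[OF summ' r'])
  then have r2: "rat (nbhd_inf R) (gs g (A \<inter> {x. x j < a j}))"
    unfolding g'_def gs_restrict .
  have eq: "gs g {x. \<forall>k\<in>insert j K. a k \<le> x k} z = gs g A z - gs g (A \<inter> {x. x j < a j}) z"
    if "z \<in> nbhd_inf R" for z
  proof -
    have "A - {x. x j < a j} = {x. \<forall>k\<in>insert j K. a k \<le> x k}" unfolding A_def by auto
    then show ?thesis using gs_split[OF summ[OF that], of A "{x. x j < a j}"] by simp
  qed
  have "rat (nbhd_inf R) (\<lambda>z. gs g A z - gs g (A \<inter> {x. x j < a j}) z)"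
    by (rule rat_diff[OF insert.IH[folded A_def] r2])
  then show ?case
    by (rule rat_transfer[where zw=undefined, OF _ pf_const[of 1]]) (use eq in auto)
qed

lemma finite_le_fun: "finite {\<alpha>::'n::finite \<Rightarrow> nat. \<alpha> \<le> m}"
proof (rule finite_subset)
  show "{\<alpha>. \<alpha> \<le> m} \<subseteq> PiE UNIV (\<lambda>k. {..m k})" by (auto simp: le_fun_def PiE_iff)
  show "finite (PiE (UNIV::'n set) (\<lambda>k. {..m k}))" by (rule finite_PiE) auto
qed

lemma mpow_nz: "(\<And>l. z l \<noteq> 0) \<Longrightarrow> mpow z \<beta> \<noteq> 0"
  unfolding mpow_def by simp

lemma infsum_finite_sum:
  fixes h :: "'b \<Rightarrow> 'a \<Rightarrow> complex"
  assumes "finite I" "\<And>i. i \<in> I \<Longrightarrow> h i summable_on B"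
  shows "(\<Sum>i\<in>I. infsum (h i) B) = infsum (\<lambda>x. \<Sum>i\<in>I. h i x) B"
    and "(\<lambda>x. \<Sum>i\<in>I. h i x) summable_on B"
  using assms
proof (induction I rule: finite_induct)
  case empty
  { case 1 show ?case by simp }
  { case 2 show ?case by simp }
next
  case (insert j I)
  { case 1
    have "(\<Sum>i\<in>insert j I. infsum (h i) B) = infsum (h j) B + infsum (\<lambda>x. \<Sum>i\<in>I. h i x) B"
      using insert 1 by simp
    also have "\<dots> = infsum (\<lambda>x. h j x + (\<Sum>i\<in>I. h i x)) B"
      by (rule infsum_add[symmetric]) (use insert 1 in auto)
    finally show ?case using insert by simp }
  { case 2
    have "(\<lambda>x. h j x + (\<Sum>i\<in>I. h i x)) summable_on B"
      by (rule summable_on_add) (use insert 2 in auto)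
    then show ?case using insert by simp }
qed



lemma shift_sum:
  fixes f :: "('n::finite \<Rightarrow> nat) \<Rightarrow> complex"
  assumes summ: "(\<lambda>x. f x / mpow z (\<lambda>l. x l + 1)) summable_on UNIV" and nz: "\<And>l. z l \<noteq> 0"
  shows "(\<lambda>x. f (\<lambda>l. x l + \<alpha> l) / mpow z (\<lambda>l. x l + 1)) summable_on UNIV"
    and "mpow z \<alpha> * gs f {y. \<alpha> \<le> y} z = (\<Sum>\<^sub>\<infinity>x. f (\<lambda>l. x l + \<alpha> l) / mpow z (\<lambda>l. x l + 1))"
proof -
  define h where "h = (\<lambda>(x::'n\<Rightarrow>nat) l. x l + \<alpha> l)"
  define T where "T = (\<lambda>x. f x / mpow z (\<lambda>l. x l + 1))"
  have inj: "inj h" unfolding h_def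
  proof (rule injI)
    fix x y assume "(\<lambda>l. x l + \<alpha> l) = (\<lambda>l. y l + \<alpha> l)"
    then have "\<And>l. x l + \<alpha> l = y l + \<alpha> l" by metis
    then show "x = y" by auto
  qed
  have img: "h ` UNIV = {y. \<alpha> \<le> y}"
  proof safe
    fix x show "\<alpha> \<le> h x" unfolding h_def by (simp add: le_fun_def)
  next
    fix y assume "\<alpha> \<le> y"
    then have "y = h (\<lambda>l. y l - \<alpha> l)" unfolding h_def by (auto simp: le_fun_def)
    then show "y \<in> range h" by blast
  qed
  have mz: "mpow z \<alpha> \<noteq> 0" using nz by (rule mpow_nz)
  have Th: "mpow z \<alpha> * (T \<circ> h) x = f (\<lambda>l. x l + \<alpha> l) / mpow z (\<lambda>l. x l + 1)" for x
  proof -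
    have "mpow z (\<lambda>l. h x l + 1) = mpow z (\<lambda>l. (x l + 1) + \<alpha> l)" unfolding h_def
      by (simp add: add.commute add.left_commute)
    also have "\<dots> = mpow z (\<lambda>l. x l + 1) * mpow z \<alpha>" by (rule mpow_add)
    finally show ?thesis unfolding T_def o_def using mz by (simp add: h_def)
  qed
  have "T summable_on {y. \<alpha> \<le> y}" using summable_on_subset_banach[OF summ[folded T_def]] by blast
  then have Ts: "(T \<circ> h) summable_on UNIV" unfolding img[symmetric] by (simp add: summable_on_reindex[OF inj])
  have "(\<lambda>x. mpow z \<alpha> * (T \<circ> h) x) summable_on UNIV" by (rule summable_on_cmult_right[OF Ts])
  then show "(\<lambda>x. f (\<lambda>l. x l + \<alpha> l) / mpow z (\<lambda>l. x l + 1)) summable_on UNIV" unfolding Th .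
  have "gs f {y. \<alpha> \<le> y} z = infsum (T \<circ> h) UNIV"
    unfolding gs_def T_def[symmetric] img[symmetric] by (rule infsum_reindex[OF inj])
  moreover have "infsum (\<lambda>x. mpow z \<alpha> * (T \<circ> h) x) UNIV = mpow z \<alpha> * infsum (T \<circ> h) UNIV"
    by (rule infsum_cmult_right) (use Ts in \<open>auto simp: o_def\<close>)
  ultimately have "mpow z \<alpha> * gs f {y. \<alpha> \<le> y} z = infsum (\<lambda>x. mpow z \<alpha> * (T \<circ> h) x) UNIV"
    by simp
  then show "mpow z \<alpha> * gs f {y. \<alpha> \<le> y} z = (\<Sum>\<^sub>\<infinity>x. f (\<lambda>l. x l + \<alpha> l) / mpow z (\<lambda>l. x l + 1))"
    unfolding Th .
qed

theorem theorem3: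
  fixes m :: "'n::finite \<Rightarrow> nat"
    and c :: "('n \<Rightarrow> nat) \<Rightarrow> complex"
    and \<phi> f :: "('n \<Rightarrow> nat) \<Rightarrow> complex"
    and R :: real
  assumes cm: "c m \<noteq> 0"
    and c_supp: "\<And>\<alpha>. \<not> (\<alpha> \<le> m) \<Longrightarrow> c \<alpha> = 0"
    and rec: "\<And>x. (\<Sum>\<alpha>\<in>{\<alpha>. \<alpha> \<le> m}. c \<alpha> * f (\<lambda>k. x k + \<alpha> k)) = 0"
    and init: "\<And>\<tau>. (\<exists>k. \<tau> k < m k) \<Longrightarrow> f \<tau> = \<phi> \<tau>"
    and conv: "\<And>z. z \<in> nbhd_inf R \<Longrightarrow> (\<lambda>x. f x / mpow z (\<lambda>k. x k + 1)) summable_on UNIV"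
  shows "rational_on (nbhd_inf R) (\<lambda>z. \<Sum>\<^sub>\<infinity>x. f x / mpow z (\<lambda>k. x k + 1))
     \<longleftrightarrow> rational_on (nbhd_inf R)
           (\<lambda>z. \<Sum>\<^sub>\<infinity>\<tau>\<in>{\<tau>. \<exists>k. \<tau> k < m k}. \<phi> \<tau> / mpow z (\<lambda>k. \<tau> k + 1))"
proof -
  define U where "U = (nbhd_inf R :: ('n \<Rightarrow> complex) set)"
  define X0 where "X0 = {\<tau>::'n\<Rightarrow>nat. \<exists>k. \<tau> k < m k}"
  define M where "M = {x::'n\<Rightarrow>nat. \<forall>k\<in>UNIV. m k \<le> x k}"
  have summ: "\<And>z. z \<in> nbhd_inf R \<Longrightarrow> (\<lambda>x. f x / mpow z (\<lambda>l. x l + 1)) summable_on UNIV"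
    using conv by simp
  have F_eq: "(\<lambda>z. \<Sum>\<^sub>\<infinity>x. f x / mpow z (\<lambda>k. x k + 1)) = gs f UNIV"
    unfolding gs_def by simp
  have Phi_eq: "(\<lambda>z. \<Sum>\<^sub>\<infinity>\<tau>\<in>{\<tau>. \<exists>k. \<tau> k < m k}. \<phi> \<tau> / mpow z (\<lambda>k. \<tau> k + 1)) = gs f X0"
    unfolding gs_def X0_def by (intro ext infsum_cong) (simp add: init)
  have UM: "UNIV - M = X0" unfolding M_def X0_def by (auto simp: not_le) (metis leD)
  have Phi_split: "gs f X0 z = gs f UNIV z - gs f M z" if "z \<in> U" for z
    using gs_split[OF summ[OF that[unfolded U_def]], of UNIV M] UM by simp
  show ?thesis unfolding F_eq Phi_eq rational_on_iff_rat U_def[symmetric]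
  proof
    assume r: "rat U (gs f UNIV)"
    have "rat U (gs f M)" unfolding M_def U_def
      by (rule TL[OF summ r[unfolded U_def] finite_class.finite_UNIV])
    then have "rat U (\<lambda>z. gs f UNIV z - gs f M z)" by (rule rat_diff[OF r])
    then show "rat U (gs f X0)"
      by (rule rat_transfer[where zw=undefined, OF _ pf_const[of 1]]) (use Phi_split in auto)
  next
    assume r: "rat U (gs f X0)"
    define g0 where "g0 = (\<lambda>x. if x \<in> X0 then f x else 0)"
    have summ0: "\<And>z. z \<in> nbhd_inf R \<Longrightarrow> (\<lambda>x. g0 x / mpow z (\<lambda>l. x l + 1)) summable_on UNIV"
      unfolding g0_def by (rule summ_restrict[OF summ])
    have r0: "rat (nbhd_inf R) (gs g0 UNIV)" using r unfolding g0_def gs_restrict U_def by simp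
    define Am where "Am = {\<alpha>::'n\<Rightarrow>nat. \<alpha> \<le> m}"
    have finAm: "finite Am" unfolding Am_def by (rule finite_le_fun)
    define Fa where "Fa = (\<lambda>\<alpha> z. gs f {y. \<not> \<alpha> \<le> y} z)"
    have ratFa: "rat U (Fa \<alpha>)" if "\<alpha> \<in> Am" for \<alpha>
    proof -
      have sub: "X0 \<inter> {y. \<not> \<alpha> \<le> y} = {y. \<not> \<alpha> \<le> y}"
        using that unfolding Am_def X0_def by (auto simp: le_fun_def not_le intro: less_le_trans)
      have "rat (nbhd_inf R) (gs g0 {y. \<forall>k\<in>UNIV. \<alpha> k \<le> y k})"
        by (rule TL[OF summ0 r0 finite_class.finite_UNIV])
      then have rd: "rat U (\<lambda>z. gs g0 UNIV z - gs g0 {y. \<forall>k\<in>UNIV. \<alpha> k \<le> y k} z)"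
        unfolding U_def by (rule rat_diff[OF r0])
      have eqF: "Fa \<alpha> z = gs g0 UNIV z - gs g0 {y. \<forall>k\<in>UNIV. \<alpha> k \<le> y k} z" if "z \<in> U" for z
      proof -
        have "UNIV - {y. \<forall>k\<in>UNIV. \<alpha> k \<le> y k} = {y. \<not> \<alpha> \<le> y}" by (auto simp: le_fun_def)
        then have "gs g0 UNIV z = gs g0 {y. \<forall>k\<in>UNIV. \<alpha> k \<le> y k} z + gs g0 {y. \<not> \<alpha> \<le> y} z"
          using gs_split[OF summ0[OF that[unfolded U_def]], of UNIV "{y. \<forall>k\<in>UNIV. \<alpha> k \<le> y k}"] by simp
        moreover have "gs g0 {y. \<not> \<alpha> \<le> y} z = Fa \<alpha> z" unfolding g0_def gs_restrict sub Fa_def ..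
        ultimately show ?thesis by simp
      qed
      show ?thesis
        by (rule rat_transfer[where zw=undefined, OF rd pf_const[of 1]]) (use eqF in auto)
    qed
    define chp where "chp = (\<lambda>z. \<Sum>\<alpha>\<in>Am. c \<alpha> * mpow z \<alpha>)"
    have chp_pf: "pf chp" unfolding chp_def by (intro pf_sum pf_mult pf_const pf_mpow finAm)
    have "\<exists>z. (\<Sum>j\<in>Am. c j * mpow z (id j)) \<noteq> 0 \<and> (\<Sum>j\<in>Am. c j * mpow z (id j)) \<noteq> 0"
      by (rule KL_gen[of "UNIV::'n set" Am id m c Am id m c]) (use finAm cm in \<open>auto simp: Am_def\<close>)
    then obtain zc where zc: "chp zc \<noteq> 0" unfolding chp_def by auto
    define B where "B = (\<lambda>z. (\<Prod>l\<in>UNIV. z l) * chp z)"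
    have B_pf: "pf B" unfolding B_def by (intro pf_mult pf_prod pf_coord chp_pf) auto
    have "\<exists>z. (\<Prod>l\<in>UNIV. z l) \<noteq> 0 \<and> chp z \<noteq> 0"
      by (rule KL[of "\<lambda>z. \<Prod>l\<in>UNIV. z l" chp "\<lambda>_. 1" zc]) (use zc in \<open>auto intro: pf_prod pf_coord chp_pf\<close>)
    then obtain zb where zb: "B zb \<noteq> 0" unfolding B_def by auto
    have rRHS: "rat U (\<lambda>z. (\<Sum>\<alpha>\<in>Am. c \<alpha> * mpow z \<alpha> * Fa \<alpha> z) / chp z)"
      by (intro rat_div[OF _ chp_pf zc] rat_sum finAm rat_mult rat_pf pf_mult pf_const pf_mpow ratFa)
    have key: "gs f UNIV z = (\<Sum>\<alpha>\<in>Am. c \<alpha> * mpow z \<alpha> * Fa \<alpha> z) / chp z" if z: "z \<in> U" "B z \<noteq> 0" for z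
    proof -
      have nz: "\<And>l. z l \<noteq> 0" "chp z \<noteq> 0" using z(2) unfolding B_def by auto
      have sz: "(\<lambda>x. f x / mpow z (\<lambda>l. x l + 1)) summable_on UNIV" using summ z(1) unfolding U_def by blast
      have d: "gs f UNIV z - Fa \<alpha> z = gs f {y. \<alpha> \<le> y} z" for \<alpha>
      proof -
        have "UNIV - {y. \<alpha> \<le> y} = {y. \<not> \<alpha> \<le> y}" by auto
        then show ?thesis using gs_split[OF sz, of UNIV "{y. \<alpha> \<le> y}"] unfolding Fa_def by simp
      qed
      have "(\<Sum>\<alpha>\<in>Am. c \<alpha> * mpow z \<alpha> * (gs f UNIV z - Fa \<alpha> z))
          = (\<Sum>\<alpha>\<in>Am. \<Sum>\<^sub>\<infinity>x. c \<alpha> * (f (\<lambda>l. x l + \<alpha> l) / mpow z (\<lambda>l. x l + 1)))"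
      proof (rule sum.cong[OF refl])
        fix \<alpha>
        have "c \<alpha> * mpow z \<alpha> * (gs f UNIV z - Fa \<alpha> z) = c \<alpha> * (mpow z \<alpha> * gs f {y. \<alpha> \<le> y} z)"
          unfolding d by simp
        also have "\<dots> = c \<alpha> * (\<Sum>\<^sub>\<infinity>x. f (\<lambda>l. x l + \<alpha> l) / mpow z (\<lambda>l. x l + 1))"
          unfolding shift_sum(2)[OF sz nz(1)] ..
        also have "\<dots> = (\<Sum>\<^sub>\<infinity>x. c \<alpha> * (f (\<lambda>l. x l + \<alpha> l) / mpow z (\<lambda>l. x l + 1)))"
          by (rule infsum_cmult_right[symmetric]) (use shift_sum(1)[OF sz nz(1)] in auto)
        finally show "c \<alpha> * mpow z \<alpha> * (gs f UNIV z - Fa \<alpha> z) = (\<Sum>\<^sub>\<infinity>x. c \<alpha> * (f (\<lambda>l. x l + \<alpha> l) / mpow z (\<lambda>l. x l + 1)))" .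
      qed
      also have "\<dots> = (\<Sum>\<^sub>\<infinity>x. \<Sum>\<alpha>\<in>Am. c \<alpha> * (f (\<lambda>l. x l + \<alpha> l) / mpow z (\<lambda>l. x l + 1)))"
        by (rule infsum_finite_sum(1)[OF finAm]) (use summable_on_cmult_right[OF shift_sum(1)[OF sz nz(1)]] in auto)
      also have "\<dots> = 0"
      proof -
        have "(\<Sum>\<alpha>\<in>Am. c \<alpha> * (f (\<lambda>l. x l + \<alpha> l) / mpow z (\<lambda>l. x l + 1))) = 0" for x
        proof -
          have "(\<Sum>\<alpha>\<in>Am. c \<alpha> * (f (\<lambda>l. x l + \<alpha> l) / mpow z (\<lambda>l. x l + 1)))
              = (\<Sum>\<alpha>\<in>Am. c \<alpha> * f (\<lambda>l. x l + \<alpha> l)) / mpow z (\<lambda>l. x l + 1)"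
            by (simp add: sum_divide_distrib)
          also have "\<dots> = 0" using rec[of x] unfolding Am_def by simp
          finally show ?thesis .
        qed
        then show ?thesis by simp
      qed
      finally have "(\<Sum>\<alpha>\<in>Am. c \<alpha> * mpow z \<alpha> * (gs f UNIV z - Fa \<alpha> z)) = 0" .
      then have "chp z * gs f UNIV z = (\<Sum>\<alpha>\<in>Am. c \<alpha> * mpow z \<alpha> * Fa \<alpha> z)"
        unfolding chp_def by (simp add: right_diff_distrib sum_subtractf sum_distrib_right)
      then show ?thesis using nz(2) by (simp add: field_simps)
    qed
    show "rat U (gs f UNIV)"
      by (rule rat_transfer[where zw=zb, OF rRHS B_pf zb]) (use key in auto)
  qed
qed

end
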